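(* For all $(y_1,a_1),(y_2,a_2)\in(\mathcal{A}\sqcup\mathcal{B})\times\mathcal{A}$ and $\varepsilon_1,\varepsilon_2\in\{\pm1\}$, either $(y_1,a_1)=(y_2,a_2)$ and $\varepsilon_1=-\varepsilon_2$, or fewer than $\frac14 D_{\mathcal{A}}$ letters of $v(y_j,a_j)$ ($j=1,2$) are cancelled in the free reduction of the product $v(y_1,a_1)^{\varepsilon_1}v(y_2,a_2)^{\varepsilon_2}$. In particular, $S_{\mathcal{A}}=\{v(y,a):(y,a)\in(\mathcal{A}\sqcup\mathcal{B})\times\mathcal{A}\}$ is a basis of a free subgroup of $F(\mathcal{B})$.
   Context: Let $\mathcal{A}$ be a finite non-empty alphabet and $\mathcal{B}=\{b_1,b_2\}$ (disjoint from $\mathcal{A}$); $F(\mathcal{B})$ is the free group on $\mathcal{B}$. Let $D_{\mathcal{A}}=4|\mathcal{A}|(|\mathcal{A}|+2)$ and fix a bijection $\eta_{\mathcal{A}}:(\mathcal{A}\sqcup\mathcal{B})\times\mathcal{A}\to\{1,\dots,D_{\mathcal{A}}/4\}$. For $y\in\mathcal{A}\sqcup\mathcal{B}$ and $a\in\mathcal{A}$ set $k=\eta_{\mathcal{A}}(y,a)$ and $v(y,a)=b_1^k(b_2b_1)^{D_{\mathcal{A}}-2k}b_2^k\in F(\mathcal{B})$. *)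

theory Defs
  imports Main
begin

text \<open>Words in the free group F(B), B = {b1,b2}.  A letter is a pair (g, e) of a
generator g and a flag e; e = True means the inverse letter g^-1.
The generators are encoded by bool: b1 = False, b2 = True.\<close>

type_synonym 'g letter = "'g \<times> bool"
type_synonym 'g word = "'g letter list"

definition b1 :: bool where "b1 = False"
definition b2 :: bool where "b2 = True"

definition inv_letter :: "'g letter \<Rightarrow> 'g letter" where
  "inv_letter x = (fst x, \<not> snd x)"

definition inv_word :: "'g word \<Rightarrow> 'g word" where
  "inv_word w = rev (map inv_letter w)"

definition wpow :: "'g word \<Rightarrow> int \<Rightarrow> 'g word" where
  "wpow w eps = (if eps = 1 then w else inv_word w)"

fun red :: "'g word \<Rightarrow> 'g word" where
  "red [] = []"
| "red (x # xs) = (case red xs of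
       [] \<Rightarrow> [x]
     | y # ys \<Rightarrow> (if y = inv_letter x then ys else x # y # ys))"

text \<open>Number of letters of u (equivalently of w) cancelled in the free reduction
of the product u w of two freely reduced words u, w: the length of the longest
suffix of u that is the inverse of a prefix of w.\<close>
definition cancelled :: "'g word \<Rightarrow> 'g word \<Rightarrow> nat" where
  "cancelled u w = (GREATEST n. n \<le> length u \<and> n \<le> length w \<and>
                        drop (length u - n) u = inv_word (take n w))"

definition DA :: "'a set \<Rightarrow> nat" where
  "DA A = 4 * card A * (card A + 2)"

definition vword :: "'a set \<Rightarrow> (('a + bool) \<times> 'a \<Rightarrow> nat) \<Rightarrow> ('a + bool) \<Rightarrow> 'a \<Rightarrow> bool word" where
  "vword A eta y a = (let k = eta (y, a) in
      replicate k (b1, False)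
      @ concat (replicate (DA A - 2 * k) [(b2, False), (b1, False)])
      @ replicate k (b2, False))"

text \<open>S is a basis of a free subgroup of F(B): every nonempty freely reduced word
in S^{+-1} (no factor s^e immediately followed by s^-e) has nontrivial free
reduction in F(B).\<close>
definition free_basis :: "'g word set \<Rightarrow> bool" where
  "free_basis S \<longleftrightarrow>
     (\<forall>ws :: ('g word \<times> bool) list.
        ws \<noteq> [] \<and> set (map fst ws) \<subseteq> S \<and>
        (\<forall>i. Suc i < length ws \<longrightarrow>
             \<not> (fst (ws ! i) = fst (ws ! Suc i) \<and> snd (ws ! i) \<noteq> snd (ws ! Suc i)))
        \<longrightarrow> red (concat (map (\<lambda>(s, e). if e then inv_word s else s) ws)) \<noteq> [])"

end

theory Submission imports Defs begin

definition cr :: "'g letter \<Rightarrow> 'g word \<Rightarrow> 'g word" where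
  "cr x w = (case w of [] \<Rightarrow> [x] | y # ys \<Rightarrow> (if y = inv_letter x then ys else x # y # ys))"

lemma red_cons: "red (x # xs) = cr x (red xs)"
  by (simp add: cr_def)

lemma red_append: "red (u @ w) = foldr cr u (red w)"
  by (induction u) (simp_all add: cr_def)

fun rd :: "'g word \<Rightarrow> bool" where
  "rd (x # y # r) = (y \<noteq> inv_letter x \<and> rd (y # r))"
| "rd _ = True"

lemma rd_tl: "rd (x # u) \<Longrightarrow> rd u"
  by (cases u) auto

lemma rd_const: "\<forall>z\<in>set w. snd z = b \<Longrightarrow> rd w"
  by (induction w rule: rd.induct) (auto simp: inv_letter_def)

definition mt :: "'g word \<Rightarrow> 'g word \<Rightarrow> nat \<Rightarrow> bool" where
  "mt u w n = (drop (length u - n) u = inv_word (take n w))"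

lemma inv_inv_letter[simp]: "inv_letter (inv_letter x) = x"
  by (simp add: inv_letter_def)

lemma inv_inv_word[simp]: "inv_word (inv_word x) = x"
  by (simp add: inv_word_def rev_map map_map o_def)

lemma length_inv_word[simp]: "length (inv_word x) = length x"
  by (simp add: inv_word_def)

lemma inv_word_append: "inv_word (a @ b) = inv_word b @ inv_word a"
  by (simp add: inv_word_def)

lemma inv_take_inv: "inv_word (take n (inv_word x)) = drop (length x - n) x"
  by (simp add: inv_word_def take_rev rev_map[symmetric] map_map o_def drop_map)

lemma foldlem:
  assumes "rd u"
  shows "\<exists>c. c \<le> length u \<and> c \<le> length R \<and> mt u R c \<and>
             foldr cr u R = take (length u - c) u @ drop c R"
  using assms
proof (induction u)
  case Nil
  show ?case by (rule exI[of _ 0]) (simp add: mt_def inv_word_def)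
next
  case (Cons x u')
  from Cons.IH[OF rd_tl[OF Cons.prems]] obtain c' where
    c': "c' \<le> length u'" "c' \<le> length R" "mt u' R c'"
        "foldr cr u' R = take (length u' - c') u' @ drop c' R" by blast
  define T where "T = foldr cr u' R"
  have fx: "foldr cr (x # u') R = cr x T" by (simp add: T_def)
  show ?case
  proof (cases T)
    case Nil
    then have e: "c' = length u'" "c' = length R" using c' T_def by auto
    have 1: "foldr cr (x # u') R = [x]" using fx Nil by (simp add: cr_def)
    have 2: "take (length (x # u') - c') (x # u') = [x]" using e by simp
    have 3: "drop c' R = []" using e by simp
    have 4: "mt (x # u') R c'" using c'(3) e by (simp add: mt_def)
    show ?thesis
      apply (rule exI[of _ c'])
      using 1 2 3 4 c' by simp
  next
    case (Cons y ys)
    show ?thesis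
    proof (cases "y = inv_letter x")
      case True
      have "c' = length u'"
      proof (rule ccontr)
        assume "c' \<noteq> length u'"
        then have "length u' - c' > 0" using c' by simp
        then obtain z zs where z: "u' = z # zs" by (cases u') auto
        then have "y = z" using Cons c'(4) \<open>length u' - c' > 0\<close> T_def
          by (cases "length u' - c'") auto
        then show False using True Cons.prems z by simp
      qed
      then have T2: "T = drop c' R" using c'(4) T_def by simp
      then have "c' < length R" using Cons by (cases "c' < length R") auto
      then have Rc: "R ! c' = y" "ys = drop (Suc c') R"
        using T2 Cons Cons_nth_drop_Suc[OF \<open>c' < length R\<close>] by (metis list.inject)+
      have tk: "take (Suc c') R = take c' R @ [R ! c']"
        using \<open>c' < length R\<close> by (simp add: take_Suc_conv_app_nth)
      have 4: "mt (x # u') R (Suc c')"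
        using c'(3) \<open>c' = length u'\<close> True Rc unfolding mt_def tk
        by (simp add: inv_word_def)
      have 1: "foldr cr (x # u') R = ys" using fx Cons True by (simp add: cr_def)
      have 2: "take (length (x # u') - Suc c') (x # u') = []" using \<open>c' = length u'\<close> by simp
      show ?thesis
        apply (rule exI[of _ "Suc c'"])
        using 1 2 4 Rc \<open>c' = length u'\<close> \<open>c' < length R\<close> by simp
    next
      case False
      have 4: "mt (x # u') R c'" using c' by (simp add: mt_def Suc_diff_le)
      have 1: "foldr cr (x # u') R = x # T" using fx Cons False by (simp add: cr_def)
      have 2: "take (length (x # u') - c') (x # u') = x # take (length u' - c') u'"
        using c'(1) by (simp add: Suc_diff_le)
      show ?thesis
        apply (rule exI[of _ c'])
        using 1 2 4 c' T_def by simp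
    qed
  qed
qed

lemma mt_down:
  assumes "mt u w n" "m \<le> n" "n \<le> length u" "n \<le> length w"
  shows "mt u w m"
proof -
  have tn: "take n w = take m w @ drop m (take n w)"
    using assms(2) by (metis append_take_drop_id min.absorb1 take_take)
  have l: "length (inv_word (drop m (take n w))) = n - m" using assms by simp
  have "drop (length u - m) u = drop (n - m) (drop (length u - n) u)"
    using assms by (simp add: drop_drop)
  also have "\<dots> = inv_word (take m w)"
    using assms(1) l unfolding mt_def by (subst (asm) tn) (simp add: inv_word_append)
  finally show ?thesis by (simp add: mt_def)
qed

definition okp :: "nat \<Rightarrow> 'g word \<Rightarrow> 'g word \<Rightarrow> bool" where
  "okp q u w = (\<forall>n. n \<le> length u \<and> n \<le> length w \<and> mt u w n \<longrightarrow> n < q)"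

lemma chain:
  assumes "ws \<noteq> []" "\<forall>w\<in>set ws. rd w \<and> 6 * q \<le> length w"
    "\<forall>i. Suc i < length ws \<longrightarrow> okp q (ws ! i) (ws ! Suc i)" "0 < q"
  shows "\<exists>p r. red (concat ws) = p @ r \<and> p = take (length p) (hd ws) \<and> length (hd ws) < length p + q"
  using assms
proof (induction ws)
  case Nil
  then show ?case by simp
next
  case (Cons x ws)
  have rx: "rd x" "6 * q \<le> length x" using Cons.prems by auto
  show ?case
  proof (cases "ws = []")
    case True
    obtain c where "c \<le> length ([]::'a word)" "foldr cr x [] = take (length x - c) x @ drop c []"
      using foldlem[OF rx(1), of "[]"] by blast
    then have "red x = x" using red_append[of x "[]"] by simp
    then show ?thesis using True Cons.prems(4) by (intro exI[of _ x] exI[of _ "[]"]) auto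
  next
    case False
    have ok: "\<forall>i. Suc i < length ws \<longrightarrow> okp q (ws ! i) (ws ! Suc i)"
      using Cons.prems(3) by (metis Suc_less_eq length_Cons nth_Cons_Suc)
    obtain p r where pr: "red (concat ws) = p @ r" "p = take (length p) (hd ws)"
      "length (hd ws) < length p + q"
      using Cons.IH[OF False _ ok Cons.prems(4)] Cons.prems(2) by auto
    define w1 where "w1 = hd ws"
    have w1: "6 * q \<le> length w1" using False Cons.prems(2) by (simp add: w1_def)
    have "okp q ((x # ws) ! 0) ((x # ws) ! Suc 0)"
      using Cons.prems(3) False by (simp del: nth_Cons_Suc nth_Cons_0)
    then have okx: "okp q x w1" using False by (simp add: w1_def hd_conv_nth)
    have e: "take (length p) w1 = p" using pr(2) w1_def by metis
    have "length p = min (length p) (length w1)" using arg_cong[OF e, of length] by simp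
    then have lp: "length p \<le> length w1" by linarith
    obtain c where c: "c \<le> length x" "c \<le> length (p @ r)" "mt x (p @ r) c"
      "foldr cr x (p @ r) = take (length x - c) x @ drop c (p @ r)"
      using foldlem[OF rx(1)] by blast
    have "c < q"
    proof (cases "c \<le> length p")
      case True
      have "take c (p @ r) = take c p" using True by simp
      also have "\<dots> = take c w1" using True e
        by (metis min.absorb1 take_take)
      finally have "take c (p @ r) = take c w1" .
      then have "mt x w1 c" using c(3) by (simp add: mt_def)
      then show ?thesis using okx True lp c(1) by (simp add: okp_def)
    next
      case False
      have "mt x (p @ r) (length p)" using mt_down[OF c(3)] False c by simp
      then have "mt x w1 (length p)" using e by (simp add: mt_def)
      then have "length p < q" using okx False lp c(1) by (simp add: okp_def)
      then show ?thesis using pr(3) w1 w1_def by simp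
    qed
    have "red (concat (x # ws)) = take (length x - c) x @ drop c (p @ r)"
      using c(4) pr(1) by (simp add: red_append)
    then show ?thesis using \<open>c < q\<close> c(1)
      by (intro exI[of _ "take (length x - c) x"] exI[of _ "drop c (p @ r)"]) auto
  qed
qed


definition V :: "nat \<Rightarrow> nat \<Rightarrow> bool word" where
  "V D k = replicate k (False, False) @ concat (replicate (D - 2 * k) [(True, False), (False, False)])
           @ replicate k (True, False)"

definition F :: "'g word \<Rightarrow> bool \<Rightarrow> 'g word" where
  "F s e = (if e then inv_word s else s)"

lemma vword_V: "vword A eta y a = V (DA A) (eta (y, a))"
  by (simp add: vword_def V_def b1_def b2_def Let_def)

lemma length_V: "length (V D k) = 2 * k + 2 * (D - 2 * k)"
  by (simp add: V_def length_concat sum_list_replicate)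

lemma set_V: "\<forall>z\<in>set (V D k). snd z = False"
  by (auto simp: V_def)

lemma set_inv_word: "set (inv_word w) = inv_letter ` set w"
  by (simp add: inv_word_def)

lemma set_F: "\<forall>z\<in>set (F (V D k) e). snd z = e"
  using set_V[of D k] by (auto simp: F_def set_inv_word inv_letter_def)

lemma rev_concat_rep: "rev (concat (replicate m l)) = concat (replicate m (rev l))"
proof (induction m)
  case 0 then show ?case by simp
next
  case (Suc m)
  have "concat (replicate m (rev l)) @ rev l = rev l @ concat (replicate m (rev l))"
    using arg_cong[OF replicate_append_same[of m "rev l"], of concat] by simp
  then show ?case using Suc by simp
qed

lemma V_front: "1 \<le> D - 2 * k \<Longrightarrow> \<exists>r. V D k = replicate k (False, False) @ (True, False) # r"
  by (cases "D - 2 * k") (auto simp: V_def)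

lemma V_back: "1 \<le> D - 2 * k \<Longrightarrow> \<exists>r. rev (V D k) = replicate k (True, False) @ (False, False) # r"
  by (cases "D - 2 * k") (auto simp: V_def rev_concat_rep replicate_append_same[symmetric])

lemma V_front2: "\<exists>r. V D k = replicate k (False, False) @ r"
  by (auto simp: V_def)

lemma V_back2: "\<exists>r. rev (V D k) = replicate k (True, False) @ r"
  by (auto simp: V_def)

lemma G:
  assumes "take n x1 = take n x2" "x1 = replicate k1 c @ d # r1" "x2 = replicate k2 c @ r2"
    "k1 < k2" "d \<noteq> c"
  shows "n \<le> k1"
proof (rule ccontr)
  assume "\<not> n \<le> k1"
  then have "take n x1 ! k1 = x1 ! k1" "take n x2 ! k1 = x2 ! k1" by simp_all
  moreover have "x1 ! k1 = d" using assms(2) by (simp add: nth_append)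
  moreover have "x2 ! k1 = c" using assms(3,4) by (simp add: nth_append)
  ultimately show False using assms(1,5) by simp
qed

lemma sign_lemma:
  assumes "\<forall>z\<in>set u. snd z = b" "\<forall>z\<in>set w. snd z = b" "mt u w n" "n \<le> length u"
  shows "n = 0"
proof (rule ccontr)
  assume "n \<noteq> 0"
  then have "drop (length u - n) u \<noteq> []" using assms(4) by simp
  then obtain z where z: "z \<in> set (drop (length u - n) u)" by (metis list.set_sel(1))
  then have "z \<in> set u" by (meson in_set_dropD)
  then have "snd z = b" using assms(1) by blast
  moreover have "z \<in> set (inv_word (take n w))" using z assms(3) by (simp add: mt_def)
  then obtain z' where "z' \<in> set w" "z = inv_letter z'"
    by (auto simp: set_inv_word dest: in_set_takeD)
  then have "snd z = (\<not> b)" using assms(2) by (auto simp: inv_letter_def)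
  ultimately show False by simp
qed

lemma okV:
  assumes "0 < q" "D = 4 * q" "k1 \<in> {1..q}" "k2 \<in> {1..q}" "\<not> (k1 = k2 \<and> e1 \<noteq> e2)"
  shows "okp q (F (V D k1) e1) (F (V D k2) e2)"
  unfolding okp_def
proof (intro allI impI)
  fix n
  assume n: "n \<le> length (F (V D k1) e1) \<and> n \<le> length (F (V D k2) e2) \<and> mt (F (V D k1) e1) (F (V D k2) e2) n"
  have d1: "1 \<le> D - 2 * k1" and d2: "1 \<le> D - 2 * k2" using assms by auto
  show "n < q"
  proof (cases "e1 = e2")
    case True
    then have "n = 0" using sign_lemma[OF set_F[of D k1 e1] set_F[of D k2 e1]] n True by simp
    then show ?thesis using assms by simp
  next
    case False
    then have kk: "k1 \<noteq> k2" using assms(5) by blast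
    have "n \<le> min k1 k2"
    proof (cases e1)
      case True
      then have e2: "\<not> e2" using False by simp
      have "inv_word (take n (V D k1)) = inv_word (take n (V D k2))"
        using n True e2 inv_take_inv[of n "inv_word (V D k1)"] by (simp add: F_def mt_def)
      then have tt: "take n (V D k1) = take n (V D k2)"
        by (metis inv_inv_word)
      show ?thesis
      proof (cases "k1 < k2")
        case True
        obtain r1 where a: "V D k1 = replicate k1 (False, False) @ (True, False) # r1" using V_front[OF d1] by blast
        obtain r2 where b: "V D k2 = replicate k2 (False, False) @ r2" using V_front2 by blast
        have "n \<le> k1" using G[OF tt a b True] by simp
        then show ?thesis using True by simp
      next
        case False
        then have "k2 < k1" using kk by simp
        obtain r1 where a: "V D k2 = replicate k2 (False, False) @ (True, False) # r1" using V_front[OF d2] by blast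
        obtain r2 where b: "V D k1 = replicate k1 (False, False) @ r2" using V_front2 by blast
        have "n \<le> k2" using G[OF tt[symmetric] a b \<open>k2 < k1\<close>] by simp
        then show ?thesis using \<open>k2 < k1\<close> by simp
      qed
    next
      case e1f: False
      then have e2: "e2" using False by simp
      have "drop (length (V D k1) - n) (V D k1) = drop (length (V D k2) - n) (V D k2)"
        using n e1f e2 inv_take_inv[of n "V D k2"] by (simp add: F_def mt_def)
      then have tt: "take n (rev (V D k1)) = take n (rev (V D k2))"
        by (simp add: take_rev)
      show ?thesis
      proof (cases "k1 < k2")
        case True
        obtain r1 where a: "rev (V D k1) = replicate k1 (True, False) @ (False, False) # r1" using V_back[OF d1] by blast
        obtain r2 where b: "rev (V D k2) = replicate k2 (True, False) @ r2" using V_back2 by blast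
        have "n \<le> k1" using G[OF tt a b True] by simp
        then show ?thesis using True by simp
      next
        case False
        then have "k2 < k1" using kk by simp
        obtain r1 where a: "rev (V D k2) = replicate k2 (True, False) @ (False, False) # r1" using V_back[OF d2] by blast
        obtain r2 where b: "rev (V D k1) = replicate k1 (True, False) @ r2" using V_back2 by blast
        have "n \<le> k2" using G[OF tt[symmetric] a b \<open>k2 < k1\<close>] by simp
        then show ?thesis using \<open>k2 < k1\<close> by simp
      qed
    qed
    then show ?thesis using assms(3,4) kk by auto
  qed
qed


theorem lemma5p1:
  fixes A :: "'a set" and eta :: "('a + bool) \<times> 'a \<Rightarrow> nat"
  assumes "finite A" and "A \<noteq> {}"
    and "bij_betw eta ((A <+> (UNIV :: bool set)) \<times> A) {1 .. DA A div 4}"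
  shows "(\<forall>y1 a1 y2 a2 (e1::int) (e2::int).
            (y1, a1) \<in> (A <+> (UNIV :: bool set)) \<times> A \<longrightarrow>
            (y2, a2) \<in> (A <+> (UNIV :: bool set)) \<times> A \<longrightarrow>
            e1 \<in> {1, -1} \<longrightarrow> e2 \<in> {1, -1} \<longrightarrow>
            ((y1, a1) = (y2, a2) \<and> e1 = - e2) \<or>
            cancelled (wpow (vword A eta y1 a1) e1) (wpow (vword A eta y2 a2) e2) < DA A div 4)
       \<and> free_basis {vword A eta y a | y a. (y, a) \<in> (A <+> (UNIV :: bool set)) \<times> A}"
proof -
  define q where "q = DA A div 4"
  define D where "D = DA A"
  define Dom where "Dom = (A <+> (UNIV :: bool set)) \<times> A"
  have D4: "D = 4 * q" unfolding q_def D_def DA_def by simp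
  have "card A > 0" using assms(1,2) by (simp add: card_gt_0_iff)
  then have q0: "0 < q" unfolding q_def DA_def by simp
  have inj: "inj_on eta Dom" and rng: "\<And>x. x \<in> Dom \<Longrightarrow> eta x \<in> {1..q}"
    using assms(3) unfolding bij_betw_def Dom_def q_def by auto
  have wpF: "wpow w e = F w (e \<noteq> 1)" for w :: "bool word" and e :: int
    by (simp add: wpow_def F_def)
  have part1: "((y1, a1) = (y2, a2) \<and> e1 = - e2) \<or>
            cancelled (wpow (vword A eta y1 a1) e1) (wpow (vword A eta y2 a2) e2) < q"
    if m1: "(y1, a1) \<in> Dom" and m2: "(y2, a2) \<in> Dom" and e1: "e1 \<in> {1, -1}" and e2: "e2 \<in> {1, -1}"
    for y1 a1 y2 a2 and e1 e2 :: int
  proof (cases "(y1, a1) = (y2, a2) \<and> e1 = - e2")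
    case True then show ?thesis by simp
  next
    case False
    define k1 where "k1 = eta (y1, a1)"
    define k2 where "k2 = eta (y2, a2)"
    have nk: "\<not> (k1 = k2 \<and> (e1 \<noteq> 1) \<noteq> (e2 \<noteq> 1))"
    proof
      assume h: "k1 = k2 \<and> (e1 \<noteq> 1) \<noteq> (e2 \<noteq> 1)"
      then have "(y1, a1) = (y2, a2)" using inj m1 m2 unfolding k1_def k2_def inj_on_def by blast
      moreover have "e1 = - e2" using h e1 e2 by auto
      ultimately show False using False by simp
    qed
    define u where "u = wpow (vword A eta y1 a1) e1"
    define w where "w = wpow (vword A eta y2 a2) e2"
    have ok: "okp q u w"
      unfolding u_def w_def wpF vword_V D_def[symmetric] k1_def[symmetric] k2_def[symmetric]
      using okV[OF q0 D4 rng[OF m1, folded k1_def] rng[OF m2, folded k2_def] nk] by simp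
    define P where "P = (\<lambda>n. n \<le> length u \<and> n \<le> length w \<and>
                        drop (length u - n) u = inv_word (take n w))"
    have "P 0" by (simp add: P_def inv_word_def)
    then have "P (Greatest P)" by (rule GreatestI_nat[where b = "length u"]) (simp add: P_def)
    then have "Greatest P < q" using ok unfolding okp_def P_def mt_def by blast
    then show ?thesis unfolding cancelled_def u_def w_def P_def by simp
  qed
  have inS: "\<exists>k\<in>{1..q}. s = V D k"
    if sS: "s \<in> {vword A eta y a | y a. (y, a) \<in> (A <+> (UNIV :: bool set)) \<times> A}" for s
  proof -
    obtain y a where ya: "s = vword A eta y a" "(y, a) \<in> Dom" using sS unfolding Dom_def by blast
    show ?thesis using rng[OF ya(2)] ya(1) unfolding D_def vword_V by blast
  qed
  have part2: "free_basis {vword A eta y a | y a. (y, a) \<in> (A <+> (UNIV :: bool set)) \<times> A}"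
    unfolding free_basis_def
  proof (intro allI impI)
    fix ws :: "(bool word \<times> bool) list"
    assume h: "ws \<noteq> [] \<and> set (map fst ws) \<subseteq> {vword A eta y a | y a. (y, a) \<in> (A <+> (UNIV :: bool set)) \<times> A} \<and>
        (\<forall>i. Suc i < length ws \<longrightarrow>
             \<not> (fst (ws ! i) = fst (ws ! Suc i) \<and> snd (ws ! i) \<noteq> snd (ws ! Suc i)))"
    define g :: "bool word \<times> bool \<Rightarrow> bool word" where "g = (\<lambda>(s, e). if e then inv_word s else s)"
    have gF: "g x = F (fst x) (snd x)" for x by (cases x) (simp add: g_def F_def)
    have kx: "\<exists>k\<in>{1..q}. fst x = V D k" if "x \<in> set ws" for x
    proof -
      have "fst x \<in> set (map fst ws)" using that by simp
      then show ?thesis using inS h by blast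
    qed
    define W where "W = map g ws"
    have W1: "W \<noteq> []" using h by (simp add: W_def)
    have W2: "\<forall>w\<in>set W. rd w \<and> 6 * q \<le> length w"
    proof
      fix w assume "w \<in> set W"
      then obtain x where x: "x \<in> set ws" "w = g x" by (auto simp: W_def)
      then obtain k where k: "k \<in> {1..q}" "fst x = V D k" using kx by blast
      have "w = F (V D k) (snd x)" using x k gF by simp
      moreover have "6 * q \<le> length (V D k)" using k D4 unfolding length_V by auto
      ultimately show "rd w \<and> 6 * q \<le> length w"
        using rd_const[OF set_F] by (simp add: F_def)
    qed
    have W3: "\<forall>i. Suc i < length W \<longrightarrow> okp q (W ! i) (W ! Suc i)"
    proof (intro allI impI)
      fix i assume i: "Suc i < length W"
      then have i': "Suc i < length ws" by (simp add: W_def)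
      then have m: "ws ! i \<in> set ws" "ws ! Suc i \<in> set ws" by simp_all
      obtain k0 where k0: "k0 \<in> {1..q}" "fst (ws ! i) = V D k0" using kx[OF m(1)] by blast
      obtain k1 where k1: "k1 \<in> {1..q}" "fst (ws ! Suc i) = V D k1" using kx[OF m(2)] by blast
      have "\<not> (k0 = k1 \<and> snd (ws ! i) \<noteq> snd (ws ! Suc i))" using h i' k0 k1 by auto
      then have "okp q (F (V D k0) (snd (ws ! i))) (F (V D k1) (snd (ws ! Suc i)))"
        by (rule okV[OF q0 D4 k0(1) k1(1)])
      moreover have "W ! i = F (V D k0) (snd (ws ! i))" using i' k0 by (simp add: W_def gF)
      moreover have "W ! Suc i = F (V D k1) (snd (ws ! Suc i))" using i' k1 by (simp add: W_def gF)
      ultimately show "okp q (W ! i) (W ! Suc i)" by simp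
    qed
    obtain p r where pr: "red (concat W) = p @ r" "length (hd W) < length p + q"
      using chain[OF W1 W2 W3 q0] by blast
    have "hd W \<in> set W" using W1 by simp
    then have "6 * q \<le> length (hd W)" using W2 by blast
    then have "p \<noteq> []" using pr(2) q0 by auto
    then show "red (concat (map (\<lambda>(s, e). if e then inv_word s else s) ws)) \<noteq> []"
      using pr(1) by (simp add: W_def g_def)
  qed
  show ?thesis
    apply (rule conjI)
    subgoal using part1 unfolding Dom_def q_def by blast
    subgoal by (rule part2)
    done
qed

end
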